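(* Let $1\le k<n$, let $w=(y_1,\dots,y_{k-r},\overline{z_r},\dots,\overline{z_1},v_1,\dots,v_{n-k-1},\widehat{v_{n-k}})\in W^{OG(k,2n)}$ and $\lambda=\mathrm{Inv}(w)$. Then for $1\le i\le k$, \[\lambda^{(1)}_i=\begin{cases} n-k+|\{l: z_i<v_l\}| & \text{if } i\le r,\\ |\{l: y_{k+1-i}>v_l\}| & \text{if } i>r,\end{cases}\qquad \lambda^{(2)}_i=\begin{cases} |\{q: z_i<z_q\}|+|\{t: z_i<y_t\}| & \text{if } i\le r,\\ 0 & \text{if } i>r,\end{cases}\] and if $\lambda^{(1)}_i=n-k$ for some $i$, then $\lambda$ is assigned $\uparrow$ if $w$ is of type I and $\downarrow$ if $w$ is of type II.
   Context: Root system $D_n$: positive roots $e_a\pm e_b$ ($a<b$). $W^{OG(k,2n)}$ is the set of signed permutations $w=(y_1,\dots,y_{k-r},\overline{z_r},\dots,\overline{z_1},v_1,\dots,v_{n-k-1},\widehat{v_{n-k}})$ of $1,\dots,n$ with an even number of barred (negative) entries, $0\le r\le k$, $y_1<\dots<y_{k-r}$, $z_r>\dots>z_1$, $v_1<\dots<v_{n-k}$, $\widehat{v_{n-k}}\in\{v_{n-k},\overline{v_{n-k}}\}$ according to the parity of $r$; $w$ is of type I if $\widehat{v_{n-k}}=v_{n-k}$ and type II otherwise. The entry in position $k+1-i$ is $\overline{z_i}$ if $i\le r$ and $y_{k+1-i}$ if $i>r$. $w$ acts by $e_a\mapsto\pm e_{|w(a)|}$ (minus if barred) and $\mathrm{Inv}(w)$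 is the set of positive roots sent to negative roots. For a set $S$ of positive roots, $\lambda^{(1)}_i$ is the number of roots of $S$ among $e_{k+1-i}\pm e_b$, $b>k$, and $\lambda^{(2)}_i$ the number of roots of $S$ of the form $e_a+e_{k+1-i}$ with $a<k+1-i$. If $\lambda^{(1)}_i=n-k$ for some $i$, $S$ is assigned $\uparrow$ if it contains $e_{k+1-i}-e_n$ and $\downarrow$ if it contains $e_{k+1-i}+e_n$ (for such $i$). *)

theory Defs
  imports Main "HOL-Library.Function_Algebras"
begin

text \<open>Vectors in Z^n are functions nat => int (coordinates 1..n); e a is the unit vector.\<close>

definition e :: "nat \<Rightarrow> nat \<Rightarrow> int" where
  "e a = (\<lambda>j. if j = a then 1 else 0)"

definition pos_roots :: "nat \<Rightarrow> (nat \<Rightarrow> int) set" where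
  "pos_roots n = {e a - e b | a b. 1 \<le> a \<and> a < b \<and> b \<le> n}
               \<union> {e a + e b | a b. 1 \<le> a \<and> a < b \<and> b \<le> n}"

text \<open>A signed permutation is w :: nat => int on positions 1..n; a barred entry is a
  negative value. It acts by e_a |-> sgn(w a) e_{|w a|}, extended linearly.\<close>
definition signed_perm :: "nat \<Rightarrow> (nat \<Rightarrow> int) \<Rightarrow> bool" where
  "signed_perm n w \<longleftrightarrow> (\<forall>a\<in>{1..n}. w a \<noteq> 0) \<and>
      bij_betw (\<lambda>a. nat \<bar>w a\<bar>) {1..n} {1..n}"

definition act :: "nat \<Rightarrow> (nat \<Rightarrow> int) \<Rightarrow> (nat \<Rightarrow> int) \<Rightarrow> (nat \<Rightarrow> int)" where
  "act n w u = (\<lambda>j. \<Sum>a\<in>{1..n}. if nat \<bar>w a\<bar> = j then sgn (w a) * u a else 0)"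

definition Inv :: "nat \<Rightarrow> (nat \<Rightarrow> int) \<Rightarrow> (nat \<Rightarrow> int) set" where
  "Inv n w = {\<alpha> \<in> pos_roots n. - act n w \<alpha> \<in> pos_roots n}"

text \<open>Membership in W^{OG(k,2n)} with a given r: positions 1..k-r hold y_1<...<y_{k-r}
  (unbarred), positions k-r+1..k hold bar z_r,...,bar z_1 with z_r > ... > z_1,
  positions k+1..n-1 hold v_1<...<v_{n-k-1} (unbarred), position n holds
  v_{n-k} or bar v_{n-k} with v_{n-k-1} < v_{n-k}; the number of barred entries is even.\<close>
definition WOG_shape :: "nat \<Rightarrow> nat \<Rightarrow> nat \<Rightarrow> (nat \<Rightarrow> int) \<Rightarrow> bool" where
  "WOG_shape n k r w \<longleftrightarrow> signed_perm n w \<and> r \<le> k \<and> k < n \<and>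
     (\<forall>a\<in>{1..k-r}. w a > 0) \<and>
     (\<forall>a\<in>{1..k-r}. \<forall>b\<in>{1..k-r}. a < b \<longrightarrow> w a < w b) \<and>
     (\<forall>a\<in>{k-r+1..k}. w a < 0) \<and>
     (\<forall>a\<in>{k-r+1..k}. \<forall>b\<in>{k-r+1..k}. a < b \<longrightarrow> - w a > - w b) \<and>
     (\<forall>a\<in>{k+1..<n}. w a > 0) \<and>
     (\<forall>a\<in>{k+1..n}. \<forall>b\<in>{k+1..n}. a < b \<longrightarrow> \<bar>w a\<bar> < \<bar>w b\<bar>) \<and>
     even (r + (if w n < 0 then 1 else 0))"

definition in_WOG :: "nat \<Rightarrow> nat \<Rightarrow> (nat \<Rightarrow> int) \<Rightarrow> bool" where
  "in_WOG n k w \<longleftrightarrow> (\<exists>r. WOG_shape n k r w)"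

definition typeI :: "nat \<Rightarrow> (nat \<Rightarrow> int) \<Rightarrow> bool" where
  "typeI n w \<longleftrightarrow> w n > 0"

definition typeII :: "nat \<Rightarrow> (nat \<Rightarrow> int) \<Rightarrow> bool" where
  "typeII n w \<longleftrightarrow> w n < 0"

definition yent :: "(nat \<Rightarrow> int) \<Rightarrow> nat \<Rightarrow> nat" where
  "yent w t = nat (w t)"
definition zent :: "nat \<Rightarrow> (nat \<Rightarrow> int) \<Rightarrow> nat \<Rightarrow> nat" where
  "zent k w i = nat (- w (k + 1 - i))"
definition vent :: "nat \<Rightarrow> (nat \<Rightarrow> int) \<Rightarrow> nat \<Rightarrow> nat" where
  "vent k w l = nat \<bar>w (k + l)\<bar>"

definition lam1 :: "nat \<Rightarrow> nat \<Rightarrow> (nat \<Rightarrow> int) set \<Rightarrow> nat \<Rightarrow> nat" where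
  "lam1 n k S i = card (S \<inter> ({e (k + 1 - i) - e b | b. k < b \<and> b \<le> n}
                              \<union> {e (k + 1 - i) + e b | b. k < b \<and> b \<le> n}))"

definition lam2 :: "nat \<Rightarrow> nat \<Rightarrow> (nat \<Rightarrow> int) set \<Rightarrow> nat \<Rightarrow> nat" where
  "lam2 n k S i = card (S \<inter> {e a + e (k + 1 - i) | a. 1 \<le> a \<and> a < k + 1 - i})"

definition arrow_up :: "nat \<Rightarrow> nat \<Rightarrow> (nat \<Rightarrow> int) set \<Rightarrow> nat \<Rightarrow> bool" where
  "arrow_up n k S i \<longleftrightarrow> e (k + 1 - i) - e n \<in> S"
definition arrow_down :: "nat \<Rightarrow> nat \<Rightarrow> (nat \<Rightarrow> int) set \<Rightarrow> nat \<Rightarrow> bool" where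
  "arrow_down n k S i \<longleftrightarrow> e (k + 1 - i) + e n \<in> S"

end

theory Submission
  imports Defs
begin
lemma e_apply: "e a j = (if j = a then 1 else 0)" by (simp add: e_def)

lemma e_inj: "e a = e b \<Longrightarrow> a = b"
  by (drule fun_cong[of _ _ a]) (simp add: e_def split: if_splits)

lemma two_pos:
  fixes f :: "nat \<Rightarrow> int"
  assumes AB: "A \<noteq> B" "A \<in> {1..n}" "B \<in> {1..n}"
    and s: "f A \<in> {1,-1}" "f B \<in> {1,-1}" and z: "\<And>j. j \<noteq> A \<Longrightarrow> j \<noteq> B \<Longrightarrow> f j = 0"
  shows "f \<in> pos_roots n \<longleftrightarrow> (if A < B then f A = 1 else f B = 1)"
proof
  assume "f \<in> pos_roots n"
  then obtain a b where ab: "1 \<le> a" "a < b" "b \<le> n" and f: "f = e a - e b \<or> f = e a + e b"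
    unfolding pos_roots_def by blast
  have fa: "f a = 1" using f ab by (auto simp: e_apply)
  have fb: "f b \<noteq> 0" using f ab by (auto simp: e_apply)
  have "a \<in> {A,B}" using fa z by fastforce
  moreover have "b \<in> {A,B}" using fb z by fastforce
  ultimately show "(if A < B then f A = 1 else f B = 1)" using ab fa AB by auto
next
  assume h: "(if A < B then f A = 1 else f B = 1)"
  show "f \<in> pos_roots n"
  proof (cases "A < B")
    case True
    then have fA: "f A = 1" using h by simp
    show ?thesis
    proof (cases "f B = 1")
      case True
      then have "f = e A + e B" using fA z AB by (auto simp: e_apply fun_eq_iff)
      then show ?thesis using \<open>A<B\<close> AB unfolding pos_roots_def by auto
    next
      case False
      then have "f = e A - e B" using fA z AB s by (auto simp: e_apply fun_eq_iff)
      then show ?thesis using \<open>A<B\<close> AB unfolding pos_roots_def by auto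
    qed
  next
    case False
    then have lt: "B < A" using AB by simp
    then have fB: "f B = 1" using h False by simp
    show ?thesis
    proof (cases "f A = 1")
      case True
      then have "f = e B + e A" using fB z AB by (auto simp: e_apply fun_eq_iff)
      then show ?thesis using lt AB unfolding pos_roots_def by auto
    next
      case False
      then have "f = e B - e A" using fB z AB s by (auto simp: e_apply fun_eq_iff)
      then show ?thesis using lt AB unfolding pos_roots_def by auto
    qed
  qed
qed

lemma act_e:
  assumes "c \<in> {1..n}"
  shows "act n w (e c) = (\<lambda>j. if j = nat \<bar>w c\<bar> then sgn (w c) else 0)"
proof
  fix j
  have "act n w (e c) j = (\<Sum>a\<in>{1..n}. if a = c then (if nat \<bar>w c\<bar> = j then sgn (w c) else 0) else 0)"
    unfolding act_def by (rule sum.cong) (auto simp: e_apply)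
  also have "\<dots> = (if j = nat \<bar>w c\<bar> then sgn (w c) else 0)" using assms by (simp add: sum.delta')
  finally show "act n w (e c) j = (if j = nat \<bar>w c\<bar> then sgn (w c) else 0)" .
qed

lemma act_diff: "act n w (u - v) = act n w u - act n w v"
  unfolding act_def by (auto simp: fun_eq_iff sum_subtractf[symmetric] intro!: sum.cong simp: algebra_simps)

lemma act_add: "act n w (u + v) = act n w u + act n w v"
  unfolding act_def by (auto simp: fun_eq_iff sum.distrib[symmetric] intro!: sum.cong simp: algebra_simps)

lemma sp_facts:
  assumes "signed_perm n w" "a \<in> {1..n}"
  shows "w a \<noteq> 0" "nat \<bar>w a\<bar> \<in> {1..n}" "sgn (w a) \<in> {1,-1}"
  using assms unfolding signed_perm_def bij_betw_def by (auto simp: sgn_if)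

lemma sp_inj:
  assumes "signed_perm n w" "a \<in> {1..n}" "b \<in> {1..n}" "a \<noteq> b"
  shows "nat \<bar>w a\<bar> \<noteq> nat \<bar>w b\<bar>"
  using assms unfolding signed_perm_def bij_betw_def inj_on_def by blast

lemma inv_minus:
  assumes sp: "signed_perm n w" and ab: "1 \<le> a" "a < b" "b \<le> n"
  shows "e a - e b \<in> Inv n w \<longleftrightarrow>
    (if nat \<bar>w a\<bar> < nat \<bar>w b\<bar> then sgn (w a) = -1 else sgn (w b) = 1)"
proof -
  have aI: "a \<in> {1..n}" and bI: "b \<in> {1..n}" using ab by auto
  have pr: "e a - e b \<in> pos_roots n" using ab unfolding pos_roots_def by blast
  let ?f = "- act n w (e a - e b)"
  have f: "?f = (\<lambda>j. - (if j = nat \<bar>w a\<bar> then sgn (w a) else 0) + (if j = nat \<bar>w b\<bar> then sgn (w b) else 0))"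
    by (simp add: act_diff act_e[OF aI] act_e[OF bI] fun_eq_iff)
  have ne: "nat \<bar>w a\<bar> \<noteq> nat \<bar>w b\<bar>" using sp_inj[OF sp aI bI] ab by simp
  have "?f \<in> pos_roots n \<longleftrightarrow> (if nat \<bar>w a\<bar> < nat \<bar>w b\<bar> then ?f (nat \<bar>w a\<bar>) = 1 else ?f (nat \<bar>w b\<bar>) = 1)"
    apply (rule two_pos[OF ne sp_facts(2)[OF sp aI] sp_facts(2)[OF sp bI]])
    using ne sp_facts(3)[OF sp aI] sp_facts(3)[OF sp bI] by (auto simp: f)
  then show ?thesis using ne unfolding Inv_def using pr by (auto simp: f)
qed

lemma inv_plus:
  assumes sp: "signed_perm n w" and ab: "1 \<le> a" "a < b" "b \<le> n"
  shows "e a + e b \<in> Inv n w \<longleftrightarrow>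
    (if nat \<bar>w a\<bar> < nat \<bar>w b\<bar> then sgn (w a) = -1 else sgn (w b) = -1)"
proof -
  have aI: "a \<in> {1..n}" and bI: "b \<in> {1..n}" using ab by auto
  have pr: "e a + e b \<in> pos_roots n" using ab unfolding pos_roots_def by blast
  let ?f = "- act n w (e a + e b)"
  have f: "?f = (\<lambda>j. - (if j = nat \<bar>w a\<bar> then sgn (w a) else 0) - (if j = nat \<bar>w b\<bar> then sgn (w b) else 0))"
    by (simp add: act_add act_e[OF aI] act_e[OF bI] fun_eq_iff)
  have ne: "nat \<bar>w a\<bar> \<noteq> nat \<bar>w b\<bar>" using sp_inj[OF sp aI bI] ab by simp
  have "?f \<in> pos_roots n \<longleftrightarrow> (if nat \<bar>w a\<bar> < nat \<bar>w b\<bar> then ?f (nat \<bar>w a\<bar>) = 1 else ?f (nat \<bar>w b\<bar>) = 1)"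
    apply (rule two_pos[OF ne sp_facts(2)[OF sp aI] sp_facts(2)[OF sp bI]])
    using ne sp_facts(3)[OF sp aI] sp_facts(3)[OF sp bI] by (auto simp: f)
  then show ?thesis using ne unfolding Inv_def using pr by (auto simp: f)
qed


lemma lam1_gen:
  assumes "k < n" "1 \<le> i"
  shows "lam1 n k S i = card {l\<in>{1..n-k}. e (k+1-i) - e (k+l) \<in> S}
                       + card {l\<in>{1..n-k}. e (k+1-i) + e (k+l) \<in> S}"
proof -
  let ?p = "k+1-i"
  have M: "{e ?p - e b | b. k < b \<and> b \<le> n} = (\<lambda>l. e ?p - e (k+l)) ` {1..n-k}"
  proof (intro equalityI subsetI)
    fix x assume "x \<in> {e ?p - e b | b. k < b \<and> b \<le> n}"
    then obtain b where "x = e ?p - e b" "k < b" "b \<le> n" by blast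
    then show "x \<in> (\<lambda>l. e ?p - e (k+l)) ` {1..n-k}" by (intro image_eqI[where x="b-k"]) auto
  qed (use assms in fastforce)
  have P: "{e ?p + e b | b. k < b \<and> b \<le> n} = (\<lambda>l. e ?p + e (k+l)) ` {1..n-k}"
  proof (intro equalityI subsetI)
    fix x assume "x \<in> {e ?p + e b | b. k < b \<and> b \<le> n}"
    then obtain b where "x = e ?p + e b" "k < b" "b \<le> n" by blast
    then show "x \<in> (\<lambda>l. e ?p + e (k+l)) ` {1..n-k}" by (intro image_eqI[where x="b-k"]) auto
  qed (use assms in fastforce)
  have im1: "S \<inter> (\<lambda>l. e ?p - e (k+l)) ` {1..n-k} = (\<lambda>l. e ?p - e (k+l)) ` {l\<in>{1..n-k}. e ?p - e (k+l) \<in> S}" by auto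
  have im2: "S \<inter> (\<lambda>l. e ?p + e (k+l)) ` {1..n-k} = (\<lambda>l. e ?p + e (k+l)) ` {l\<in>{1..n-k}. e ?p + e (k+l) \<in> S}" by auto
  have inj1: "inj_on (\<lambda>l. e ?p - e (k+l)) A" for A
    by (auto simp: inj_on_def dest: e_inj)
  have inj2: "inj_on (\<lambda>l. e ?p + e (k+l)) A" for A
    by (auto simp: inj_on_def dest: e_inj)
  have disj: "(\<lambda>l. e ?p - e (k+l)) ` {1..n-k} \<inter> (\<lambda>l. e ?p + e (k+l)) ` {1..n-k} = {}"
  proof (rule ccontr)
    assume "\<not> ?thesis"
    then obtain l l' where l: "l \<in> {1..n-k}" "l' \<in> {1..n-k}" and eq: "e ?p - e (k+l) = e ?p + e (k+l')" by blast
    have "(e ?p - e (k+l)) (k+l) = (e ?p + e (k+l')) (k+l)" using eq by (rule fun_cong)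
    moreover have "?p \<noteq> k + l" using l assms by auto
    ultimately show False by (simp add: e_apply split: if_splits)
  qed
  have "lam1 n k S i = card ((S \<inter> (\<lambda>l. e ?p - e (k+l)) ` {1..n-k}) \<union> (S \<inter> (\<lambda>l. e ?p + e (k+l)) ` {1..n-k}))"
    unfolding lam1_def M P by (simp add: Int_Un_distrib)
  also have "\<dots> = card (S \<inter> (\<lambda>l. e ?p - e (k+l)) ` {1..n-k}) + card (S \<inter> (\<lambda>l. e ?p + e (k+l)) ` {1..n-k})"
    by (rule card_Un_disjoint) (use disj in auto)
  also have "\<dots> = card {l\<in>{1..n-k}. e ?p - e (k+l) \<in> S} + card {l\<in>{1..n-k}. e ?p + e (k+l) \<in> S}"
    unfolding im1 im2 card_image[OF inj1] card_image[OF inj2] ..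
  finally show ?thesis .
qed

lemma lam2_gen:
  shows "lam2 n k S i = card {a\<in>{1..<k+1-i}. e a + e (k+1-i) \<in> S}"
proof -
  let ?p = "k+1-i"
  have "S \<inter> {e a + e ?p | a. 1 \<le> a \<and> a < ?p} = (\<lambda>a. e a + e ?p) ` {a\<in>{1..<?p}. e a + e ?p \<in> S}" by auto
  moreover have "inj_on (\<lambda>a. e a + e ?p) A" for A by (auto simp: inj_on_def dest: e_inj)
  ultimately show ?thesis unfolding lam2_def by (simp add: card_image)
qed


theorem lemma3p14:
  fixes n k r :: nat and w :: "nat \<Rightarrow> int"
  assumes "1 \<le> k" and "k < n" and "WOG_shape n k r w"
  shows "\<forall>i\<in>{1..k}.
           lam1 n k (Inv n w) i =
             (if i \<le> r then n - k + card {l\<in>{1..n-k}. zent k w i < vent k w l}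
              else card {l\<in>{1..n-k}. yent w (k + 1 - i) > vent k w l})
         \<and> lam2 n k (Inv n w) i =
             (if i \<le> r then card {q\<in>{1..r}. zent k w i < zent k w q}
                             + card {t\<in>{1..k-r}. zent k w i < yent w t}
              else 0)
         \<and> (lam1 n k (Inv n w) i = n - k \<longrightarrow>
              (typeI n w \<longrightarrow> arrow_up n k (Inv n w) i \<and> \<not> arrow_down n k (Inv n w) i) \<and>
              (typeII n w \<longrightarrow> arrow_down n k (Inv n w) i \<and> \<not> arrow_up n k (Inv n w) i))"
proof
  fix i assume iI: "i \<in> {1..k}"
  note sh = assms(3)[unfolded WOG_shape_def]
  have sp: "signed_perm n w" and rk: "r \<le> k" using sh by auto
  have ypos: "\<And>a. a \<in> {1..k-r} \<Longrightarrow> w a > 0" using sh by blast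
  have zneg: "\<And>a. a \<in> {k-r+1..k} \<Longrightarrow> w a < 0" using sh by blast
  have zmono: "\<And>a b. a \<in> {k-r+1..k} \<Longrightarrow> b \<in> {k-r+1..k} \<Longrightarrow> a < b \<Longrightarrow> - w a > - w b" using sh by blast
  have vpos: "\<And>a. a \<in> {k+1..<n} \<Longrightarrow> w a > 0" using sh by blast
  define p where "p = k + 1 - i"
  define W where "W = (\<lambda>x. nat \<bar>w x\<bar>)"
  define L where "L = {1..n-k}"
  have p: "1 \<le> p" "p \<le> k" "p < n" using iI assms p_def by auto
  have cL: "card L = n - k" "finite L" unfolding L_def by auto
  have kl: "\<And>l. l \<in> L \<Longrightarrow> p < k + l \<and> k + l \<le> n \<and> k + l \<in> {1..n}" using p unfolding L_def by auto
  have sgnL: "\<And>l. l \<in> L \<Longrightarrow> sgn (w (k+l)) = 1 \<or> sgn (w (k+l)) = -1"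
    using sp_facts(3)[OF sp] kl by auto
  have injp: "\<And>a. a \<in> {1..n} \<Longrightarrow> a \<noteq> p \<Longrightarrow> W a \<noteq> W p"
    using sp_inj[OF sp] p unfolding W_def by auto
  have Cm: "\<And>l. l \<in> L \<Longrightarrow> e p - e (k+l) \<in> Inv n w \<longleftrightarrow> (if W p < W (k+l) then sgn (w p) = -1 else sgn (w (k+l)) = 1)"
    using inv_minus[OF sp] p kl unfolding W_def by auto
  have Cp: "\<And>l. l \<in> L \<Longrightarrow> e p + e (k+l) \<in> Inv n w \<longleftrightarrow> (if W p < W (k+l) then sgn (w p) = -1 else sgn (w (k+l)) = -1)"
    using inv_plus[OF sp] p kl unfolding W_def by auto
  have l1: "lam1 n k (Inv n w) i = card {l\<in>L. e p - e (k+l) \<in> Inv n w} + card {l\<in>L. e p + e (k+l) \<in> Inv n w}"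
    unfolding p_def L_def using lam1_gen[OF assms(2)] iI by auto
  have Ca: "\<And>a. a \<in> {1..<p} \<Longrightarrow> e a + e p \<in> Inv n w \<longleftrightarrow> (if W a < W p then sgn (w a) = -1 else sgn (w p) = -1)"
    using inv_plus[OF sp] p unfolding W_def by auto
  have l2: "lam2 n k (Inv n w) i = card {a\<in>{1..<p}. e a + e p \<in> Inv n w}"
    unfolding p_def by (rule lam2_gen)
  have vent: "\<And>l. vent k w l = W (k+l)" unfolding vent_def W_def by simp
  have wn: "sgn (w n) = 1 \<longleftrightarrow> typeI n w" "sgn (w n) = -1 \<longleftrightarrow> typeII n w"
    unfolding typeI_def typeII_def by (auto simp: sgn_if)
  have nI: "n \<in> {1..n}" using p by auto
  have Wn: "W n \<noteq> W p" using injp[OF nI] p by auto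
  have am: "arrow_up n k (Inv n w) i \<longleftrightarrow> (if W p < W n then sgn (w p) = -1 else sgn (w n) = 1)"
    unfolding arrow_up_def p_def[symmetric] using inv_minus[OF sp, of p n] p unfolding W_def by auto
  have ap: "arrow_down n k (Inv n w) i \<longleftrightarrow> (if W p < W n then sgn (w p) = -1 else sgn (w n) = -1)"
    unfolding arrow_down_def p_def[symmetric] using inv_plus[OF sp, of p n] p unfolding W_def by auto
  show "lam1 n k (Inv n w) i =
             (if i \<le> r then n - k + card {l\<in>{1..n-k}. zent k w i < vent k w l}
              else card {l\<in>{1..n-k}. yent w (k + 1 - i) > vent k w l})
         \<and> lam2 n k (Inv n w) i =
             (if i \<le> r then card {q\<in>{1..r}. zent k w i < zent k w q}
                             + card {t\<in>{1..k-r}. zent k w i < yent w t}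
              else 0)
         \<and> (lam1 n k (Inv n w) i = n - k \<longrightarrow>
              (typeI n w \<longrightarrow> arrow_up n k (Inv n w) i \<and> \<not> arrow_down n k (Inv n w) i) \<and>
              (typeII n w \<longrightarrow> arrow_down n k (Inv n w) i \<and> \<not> arrow_up n k (Inv n w) i))"
  proof (cases "i \<le> r")
    case True
    have pz: "p \<in> {k-r+1..k}" using True iI unfolding p_def by auto
    have wp: "w p < 0" using zneg[OF pz] .
    have sp1: "sgn (w p) = -1" using wp by simp
    have zi: "zent k w i = W p" unfolding zent_def W_def p_def using wp p_def by simp
    define X where "X = {l\<in>L. W p < W (k+l)}"
    have A: "{l\<in>L. e p - e (k+l) \<in> Inv n w} = {l\<in>L. W p < W (k+l) \<or> sgn (w (k+l)) = 1}"
      using Cm sp1 by (auto split: if_splits)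
    have B: "{l\<in>L. e p + e (k+l) \<in> Inv n w} = {l\<in>L. W p < W (k+l) \<or> sgn (w (k+l)) = -1}"
      using Cp sp1 by (auto split: if_splits)
    have U: "{l\<in>L. W p < W (k+l) \<or> sgn (w (k+l)) = 1} \<union> {l\<in>L. W p < W (k+l) \<or> sgn (w (k+l)) = -1} = L"
      using sgnL by auto
    have I: "{l\<in>L. W p < W (k+l) \<or> sgn (w (k+l)) = 1} \<inter> {l\<in>L. W p < W (k+l) \<or> sgn (w (k+l)) = -1} = X"
      unfolding X_def by auto
    have lam1v: "lam1 n k (Inv n w) i = n - k + card X"
    proof -
      have "card {l\<in>L. W p < W (k+l) \<or> sgn (w (k+l)) = 1} + card {l\<in>L. W p < W (k+l) \<or> sgn (w (k+l)) = -1}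
          = card ({l\<in>L. W p < W (k+l) \<or> sgn (w (k+l)) = 1} \<union> {l\<in>L. W p < W (k+l) \<or> sgn (w (k+l)) = -1})
            + card ({l\<in>L. W p < W (k+l) \<or> sgn (w (k+l)) = 1} \<inter> {l\<in>L. W p < W (k+l) \<or> sgn (w (k+l)) = -1})"
        by (rule card_Un_Int) (use cL(2) in auto)
      then show ?thesis unfolding l1 A B U I cL(1) .
    qed
    have X: "X = {l\<in>{1..n-k}. zent k w i < vent k w l}" unfolding X_def L_def zi vent ..
    have split: "{a\<in>{1..<p}. e a + e p \<in> Inv n w} = {t\<in>{1..k-r}. W p < W t} \<union> {k-r+1..<p}"
    proof (intro equalityI subsetI)
      fix a assume a: "a \<in> {a\<in>{1..<p}. e a + e p \<in> Inv n w}"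
      show "a \<in> {t\<in>{1..k-r}. W p < W t} \<union> {k-r+1..<p}"
      proof (cases "a \<le> k - r")
        case True
        then have "w a > 0" using ypos a by auto
        moreover have "W a \<noteq> W p" using injp[of a] a p by auto
        ultimately show ?thesis using Ca[of a] a True sp1 by (auto split: if_splits)
      qed (use a in auto)
    next
      fix a assume a: "a \<in> {t\<in>{1..k-r}. W p < W t} \<union> {k-r+1..<p}"
      show "a \<in> {a\<in>{1..<p}. e a + e p \<in> Inv n w}"
      proof (cases "a \<le> k - r")
        case True
        then show ?thesis using a Ca[of a] pz sp1 by auto
      next
        case False
        then have "w a < 0" using zneg[of a] a pz by auto
        then show ?thesis using a Ca[of a] pz False sp1 by auto
      qed
    qed
    have c2: "card {a\<in>{1..<p}. e a + e p \<in> Inv n w} = card {t\<in>{1..k-r}. W p < W t} + (r - i)"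
      unfolding split by (subst card_Un_disjoint) (use True pz p_def rk iI in auto)
    have Y: "{t\<in>{1..k-r}. W p < W t} = {t\<in>{1..k-r}. zent k w i < yent w t}"
      using ypos unfolding zi yent_def W_def by force
    have Q: "{q\<in>{1..r}. zent k w i < zent k w q} = {Suc i..r}"
    proof (intro equalityI subsetI)
      fix q assume q: "q \<in> {q\<in>{1..r}. zent k w i < zent k w q}"
      show "q \<in> {Suc i..r}"
      proof (rule ccontr)
        assume "q \<notin> {Suc i..r}"
        then have "q \<le> i" using q by auto
        show False
        proof (cases "q = i")
          case False
          then have "- w p > - w (k+1-q)" using zmono[of p "k+1-q"] pz q \<open>q \<le> i\<close> p_def rk by auto
          then show False using q unfolding zent_def p_def by auto
        qed (use q in auto)
      qed
    next
      fix q assume q: "q \<in> {Suc i..r}"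
      then have "- w (k+1-q) > - w p" using zmono[of "k+1-q" p] pz p_def rk by auto
      then show "q \<in> {q\<in>{1..r}. zent k w i < zent k w q}" using q wp unfolding zent_def p_def by auto
    qed
    have lam2v: "lam2 n k (Inv n w) i = card {q\<in>{1..r}. zent k w i < zent k w q} + card {t\<in>{1..k-r}. zent k w i < yent w t}"
      unfolding l2 c2 Q Y by simp
    have arr: "lam1 n k (Inv n w) i = n - k \<Longrightarrow> \<not> W p < W n"
    proof
      assume "lam1 n k (Inv n w) i = n - k" "W p < W n"
      then have "X = {}" using lam1v X by simp
      moreover have "n - k \<in> X" using \<open>W p < W n\<close> assms(2) unfolding X_def L_def by auto
      ultimately show False by simp
    qed
    show ?thesis using True lam1v X lam2v arr am ap wn sp1 by auto
  next
    case False
    have py: "p \<in> {1..k-r}" using False iI unfolding p_def by auto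
    have wp: "w p > 0" using ypos[OF py] .
    have sp1: "sgn (w p) = 1" using wp by simp
    have neqL: "\<And>l. l \<in> L \<Longrightarrow> W (k+l) \<noteq> W p" using injp kl by force
    have yi: "yent w (k+1-i) = W p" unfolding yent_def W_def p_def[symmetric] using wp by simp
    have A: "{l\<in>L. e p - e (k+l) \<in> Inv n w} = {l\<in>L. W (k+l) < W p \<and> sgn (w (k+l)) = 1}"
      using Cm sp1 neqL by (force split: if_splits)
    have B: "{l\<in>L. e p + e (k+l) \<in> Inv n w} = {l\<in>L. W (k+l) < W p \<and> sgn (w (k+l)) = -1}"
      using Cp sp1 neqL by (force split: if_splits)
    have U: "{l\<in>L. W (k+l) < W p \<and> sgn (w (k+l)) = 1} \<union> {l\<in>L. W (k+l) < W p \<and> sgn (w (k+l)) = -1} = {l\<in>L. W (k+l) < W p}"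
      using sgnL by auto
    have lam1v: "lam1 n k (Inv n w) i = card {l\<in>L. W (k+l) < W p}"
      unfolding l1 A B U[symmetric] by (rule card_Un_disjoint[symmetric]) (use cL in auto)
    have lam2v: "lam2 n k (Inv n w) i = 0"
    proof -
      have "{a\<in>{1..<p}. e a + e p \<in> Inv n w} = {}"
      proof (intro equalityI subsetI)
        fix a assume a: "a \<in> {a\<in>{1..<p}. e a + e p \<in> Inv n w}"
        then have "w a > 0" using ypos[of a] py by auto
        then show "a \<in> {}" using Ca[of a] a sp1 by (auto split: if_splits)
      qed simp
      then show ?thesis unfolding l2 by simp
    qed
    have arr: "lam1 n k (Inv n w) i = n - k \<Longrightarrow> W n < W p"
    proof -
      assume h: "lam1 n k (Inv n w) i = n - k"
      have "{l\<in>L. W (k+l) < W p} = L"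
        by (rule card_subset_eq) (use h lam1v cL in auto)
      moreover have "n - k \<in> L" unfolding L_def using assms(2) by auto
      ultimately have "W (k + (n-k)) < W p" by blast
      then show ?thesis using assms(2) by simp
    qed
    show ?thesis using False lam1v lam2v arr am ap wn sp1 Wn unfolding yi L_def vent by auto
  qed
qed

end
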